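(* Consider the one-period game described in the context, with government price $p_g>\max\{p_0,I\}$. Then in every (perfect Bayesian) equilibrium: (i) a firm of type $\theta$ sells its asset (to the government or to the market), at price $p_g$, if and only if $\theta<p_g+S$; in particular, since $p_g>p_0$, strictly more firms sell and fund their projects than in the laissez-faire outcome (where exactly the types $\theta\le\theta_0$ sell). (ii) If $\mu_m>0$ (the market is active), then $\bar\theta_g<\bar\theta_m$, i.e., on average lower-value assets are sold to the government than to the market.
   Context: Types: a continuum of firms with privately known type $\theta\in[0,1]$, distributed with cdf $F$ and density $f>0$, where $f$ is strictly log-concave. Each firm owns one unit of an asset worth $\theta$ and has a project requiring funding $I>0$ with net return $S>0$; the project can be funded only by selling the asset. A firm that sells at price $p\ge I$ gets payoff $p+S$; a firm that does not sell gets $\theta$. Laissez-faire benchmark: $\theta_0\in(0,1)$ is the unique solution of $\theta_0-S=\mathbb{E}[\theta\mid\theta\le\theta_0]$, and $p_0:=\mathbb{E}[\theta\mid\theta\le\theta_0]$; without intervention exactly the types $\theta\le\theta_0$ sell at price $p_0$. One-period game: the government first announces that it will buy one unit at price $p_g$; then competitive, risk-neutral buyers make price offers (Bertrand competition; buyers break even in expectation; an indifferent buyer buys); then each firm chooses to sell to the government, to sell to the market, or not to sell. Equilibrium means perfect Bayesian equilibrium. Among the types $\theta\le p_g+S$, let $\mu_g$ and $\mu_m=1-\mu_g$ be the fractions selling to the government and to the market, and $\bar\theta_g$, $\bar\theta_m$ the average asset values of those two groups. *)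

theory Defs
  imports "HOL-Analysis.Analysis"
begin

definition cdf :: "(real \<Rightarrow> real) \<Rightarrow> real \<Rightarrow> real" where
  "cdf f x = integral ({0..1} \<inter> {..x}) f"

definition cond_mean :: "(real \<Rightarrow> real) \<Rightarrow> real \<Rightarrow> real" where
  "cond_mean f x = integral ({0..1} \<inter> {..x}) (\<lambda>t. t * f t) / cdf f x"

definition strictly_log_concave_on :: "real set \<Rightarrow> (real \<Rightarrow> real) \<Rightarrow> bool" where
  "strictly_log_concave_on A f \<longleftrightarrow>
     (\<forall>x\<in>A. \<forall>y\<in>A. \<forall>u. x \<noteq> y \<and> 0 < u \<and> u < 1 \<longrightarrow>
        (1 - u) * ln (f x) + u * ln (f y) < ln (f ((1 - u) * x + u * y)))"

text \<open>Payoff of a firm selling at price p: the project is funded iff p >= I.\<close>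
definition sale_payoff :: "real \<Rightarrow> real \<Rightarrow> real \<Rightarrow> real" where
  "sale_payoff I S p = (if I \<le> p then p + S else p)"

text \<open>Equilibrium of the one-period game, given the government price pg.
  pm is the (best) market price offered by the competitive buyers; sg t and sm t
  are the probabilities that type t sells to the government / to the market
  (possibly mixed strategies), 1 - sg t - sm t the probability of not selling.
  Conditions: measurable strategies; sequential rationality of every type;
  buyers break even in expectation at price pm.\<close>
definition equilibrium ::
  "(real \<Rightarrow> real) \<Rightarrow> real \<Rightarrow> real \<Rightarrow> real \<Rightarrow> real \<Rightarrow> (real \<Rightarrow> real) \<Rightarrow> (real \<Rightarrow> real) \<Rightarrow> bool" where
  "equilibrium f I S pg pm sg sm \<longleftrightarrow>
     sg measurable_on {0..1} \<and> sm measurable_on {0..1} \<and>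
     (\<forall>t\<in>{0..1}. 0 \<le> sg t \<and> 0 \<le> sm t \<and> sg t + sm t \<le> 1) \<and>
     (\<forall>t\<in>{0..1}.
        (let best = max (max (sale_payoff I S pg) (sale_payoff I S pm)) t in
          (0 < sg t \<longrightarrow> sale_payoff I S pg = best) \<and>
          (0 < sm t \<longrightarrow> sale_payoff I S pm = best) \<and>
          (sg t + sm t < 1 \<longrightarrow> t = best))) \<and>
     ((\<lambda>t. sm t * (t - pm) * f t) has_integral 0) {0..1}"

definition group_mass :: "(real \<Rightarrow> real) \<Rightarrow> real \<Rightarrow> (real \<Rightarrow> real) \<Rightarrow> real" where
  "group_mass f c s = integral ({0..1} \<inter> {..c}) (\<lambda>t. s t * f t)"

definition group_fraction :: "(real \<Rightarrow> real) \<Rightarrow> real \<Rightarrow> (real \<Rightarrow> real) \<Rightarrow> real" where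
  "group_fraction f c s = group_mass f c s / cdf f c"

definition group_mean :: "(real \<Rightarrow> real) \<Rightarrow> real \<Rightarrow> (real \<Rightarrow> real) \<Rightarrow> real" where
  "group_mean f c s = integral ({0..1} \<inter> {..c}) (\<lambda>t. s t * t * f t) / group_mass f c s"

end

theory Submission imports Defs begin

lemma int_pos:
  fixes f :: "real \<Rightarrow> real"
  assumes fi: "f integrable_on {a..b}" and ab: "a<b" and nn: "\<And>x. x\<in>{a..b} \<Longrightarrow> 0 \<le> f x"
    and pos: "\<And>x. x\<in>{a<..<b} \<Longrightarrow> 0 < f x"
  shows "integral {a..b} f > 0"
proof -
  have ai: "set_integrable lebesgue {a..b} f"
    using nonnegative_absolutely_integrable_1[OF fi nn] by simp
  have ge: "integral {a..b} f \<ge> 0" using integral_nonneg[OF fi nn] by simp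
  have "integral {a..b} f \<noteq> 0"
  proof
    assume z: "integral {a..b} f = 0"
    have "(LINT x:{a..b} | lebesgue. f x) = 0"
      using set_lebesgue_integral_eq_integral(2)[OF ai] z by simp
    hence "integral\<^sup>L lebesgue (\<lambda>x. indicator {a..b} x *\<^sub>R f x) = 0"
      by (simp add: set_lebesgue_integral_def)
    moreover have "integrable lebesgue (\<lambda>x. indicator {a..b} x *\<^sub>R f x)"
      using ai by (simp add: set_integrable_def)
    ultimately have "AE x in lebesgue. indicator {a..b} x *\<^sub>R f x = 0"
      using integral_nonneg_eq_0_iff_AE[of lebesgue "\<lambda>x. indicator {a..b} x *\<^sub>R f x"]
      using nn by (auto simp: indicator_def)
    hence "AE x in lebesgue. x \<notin> {a<..<b}"
      by eventually_elim (use pos in \<open>fastforce simp: indicator_def split: if_splits\<close>)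
    hence "emeasure lebesgue {a<..<b} = 0"
      by (subst (asm) AE_iff_measurable[of "{a<..<b}"]) auto
    moreover have "emeasure lebesgue {a<..<b} = ennreal (b - a)"
      using ab by simp
    ultimately show False using ab by simp
  qed
  with ge show ?thesis by simp
qed


lemma prod_int:
  fixes f g :: "real \<Rightarrow> real"
  assumes "f integrable_on S" "\<And>x. x\<in>S \<Longrightarrow> 0 \<le> f x" "S \<in> sets lebesgue"
    "g \<in> borel_measurable (lebesgue_on S)" "\<And>x. x\<in>S \<Longrightarrow> \<bar>g x\<bar> \<le> B"
  shows "(\<lambda>x. g x * f x) integrable_on S"
proof -
  have "f absolutely_integrable_on S" using nonnegative_absolutely_integrable_1 assms by blast
  moreover have "bounded (g ` S)" using assms(5) unfolding bounded_iff by (auto simp: real_norm_def)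
  ultimately have "(\<lambda>x. g x * f x) absolutely_integrable_on S"
    using absolutely_integrable_bounded_measurable_product_real assms by blast
  thus ?thesis using set_lebesgue_integral_eq_integral(1) by blast
qed

lemma cont_prod_int:
  fixes f g :: "real \<Rightarrow> real"
  assumes "f integrable_on {a..b}" "\<And>x. x\<in>{a..b} \<Longrightarrow> 0 \<le> f x" "continuous_on {a..b} g"
  shows "(\<lambda>x. g x * f x) integrable_on {a..b}"
proof -
  obtain B where "\<forall>x\<in>{a..b}. norm (g x) \<le> B"
    using compact_imp_bounded[OF compact_continuous_image[OF assms(3) compact_Icc]]
    unfolding bounded_iff by auto
  then show ?thesis
    by (intro prod_int[where B=B] assms continuous_imp_measurable_on_sets_lebesgue) auto
qed

lemma logc:
  fixes f :: "real \<Rightarrow> real"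
  assumes fp: "\<forall>t\<in>{0..1}. 0 < f t" and lc: "strictly_log_concave_on {0..1} f"
    and uv: "0 \<le> u" "u \<le> v" and d: "0 < d" "v + d \<le> 1"
  shows "f u * f (v + d) \<le> f (u + d) * f v"
proof (cases "u = v")
  case True thus ?thesis by (simp add: mult.commute)
next
  case False
  hence uv': "u < v" using uv by simp
  define L where "L = v + d - u"
  have L: "L > 0" using uv' d L_def by simp
  define l where "l = d / L"
  define m where "m = (v - u) / L"
  have l: "0 < l" "l < 1" using L uv' d by (auto simp: l_def L_def field_simps)
  have m: "0 < m" "m < 1" using L uv' d by (auto simp: m_def L_def field_simps)
  have lm: "l + m = 1"
  proof -
    have "l + m = (d + (v - u)) / L" by (simp add: l_def m_def add_divide_distrib)
    also have "\<dots> = 1" using L by (simp add: L_def)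
    finally show ?thesis .
  qed
  have lL: "l * L = d" "m * L = v - u" using L by (auto simp: l_def m_def)
  have e1: "(1 - l) * u + l * (v + d) = u + d"
  proof -
    have "(1 - l) * u + l * (v + d) = u + l * L" by (simp add: L_def algebra_simps)
    thus ?thesis using lL by simp
  qed
  have e2: "(1 - m) * u + m * (v + d) = v"
  proof -
    have "(1 - m) * u + m * (v + d) = u + m * L" by (simp add: L_def algebra_simps)
    thus ?thesis using lL by simp
  qed
  have inU: "u \<in> {0..1}" "v + d \<in> {0..1}" using uv d by auto
  have ne: "u \<noteq> v + d" using uv' d by simp
  have i1: "(1 - l) * ln (f u) + l * ln (f (v+d)) < ln (f (u + d))"
    using lc inU ne l unfolding strictly_log_concave_on_def e1[symmetric] by blast
  have i2: "(1 - m) * ln (f u) + m * ln (f (v+d)) < ln (f v)"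
    using lc inU ne m unfolding strictly_log_concave_on_def by (metis e2)
  have "ln (f u) + ln (f (v+d)) < ln (f (u+d)) + ln (f v)"
  proof -
    have mm: "m = 1 - l" using lm by simp
    have "(1 - l) * ln (f u) + l * ln (f (v+d)) + ((1 - m) * ln (f u) + m * ln (f (v+d)))
       = ln (f u) + ln (f (v+d))" unfolding mm by (simp add: algebra_simps)
    thus ?thesis using i1 i2 by linarith
  qed
  moreover have "f u > 0" "f (v+d) > 0" "f (u+d) > 0" "f v > 0" using fp uv d by auto
  ultimately have "ln (f u * f (v+d)) < ln (f (u+d) * f v)" by (simp add: ln_mult)
  thus ?thesis using \<open>f u > 0\<close> \<open>f (v+d) > 0\<close> \<open>f (u+d) > 0\<close> \<open>f v > 0\<close>
    by (simp add: less_imp_le)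
qed

lemma hmono:
  fixes f :: "real \<Rightarrow> real"
  assumes fp: "\<forall>t\<in>{0..1}. 0 < f t" and fint: "f integrable_on {0..1}"
    and lc: "strictly_log_concave_on {0..1} f"
    and a: "0 < a" "a < c" "c \<le> 1"
  shows "integral {0..a} (\<lambda>s. (a - s) * f s) * integral {0..c} f
       < integral {0..c} (\<lambda>s. (c - s) * f s) * integral {0..a} f"
proof -
  define d where "d = c - a"
  have d: "0 < d" "a + d = c" using a by (auto simp: d_def)
  have fi: "f integrable_on {x..y}" if "0 \<le> x" "y \<le> 1" for x y
    using integrable_on_subinterval[OF fint] that by auto
  have nn: "0 \<le> f x" if "0 \<le> x" "x \<le> 1" for x
  proof -
    have "x \<in> {0..1}" using that by simp
    thus ?thesis using fp less_imp_le by blast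
  qed
  have wi: "(\<lambda>s. g s * f s) integrable_on {x..y}" if "0 \<le> x" "y \<le> 1" "continuous_on {x..y} g" for x y g
    using cont_prod_int[OF fi[OF that(1,2)] _ that(3)] nn that by auto
  have ia: "(\<lambda>s. (a - s) * f s) integrable_on {0..a}"
    by (rule wi) (use a in \<open>auto intro!: continuous_intros\<close>)
  have iaa: "(\<lambda>s. a * f s) integrable_on {0..a}"
    by (rule wi) (use a in \<open>auto intro!: continuous_intros\<close>)
  have ic: "(\<lambda>s. (c - s) * f s) integrable_on {0..c}"
    by (rule wi) (use a in \<open>auto intro!: continuous_intros\<close>)
  have id1: "(\<lambda>s. (d - s) * f s) integrable_on {0..d}"
    by (rule wi) (use a d in \<open>auto intro!: continuous_intros\<close>)
  have iad: "(\<lambda>s. a * f s) integrable_on {0..d}"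
    by (rule wi) (use a d in \<open>auto intro!: continuous_intros\<close>)
  define Aa where "Aa = integral {0..a} f"
  define Ka where "Ka = integral {0..a} (\<lambda>s. (a - s) * f s)"
  have Aa: "Aa > 0" unfolding Aa_def
    by (rule int_pos) (use a fi nn fp in auto)
  have Ka0: "Ka \<ge> 0" unfolding Ka_def
    by (rule integral_nonneg) (use a ia nn in auto)
  have Kale: "Ka \<le> a * Aa" unfolding Ka_def Aa_def integral_mult_right[symmetric]
    by (rule integral_le) (use a ia iaa nn in \<open>auto intro!: mult_right_mono\<close>)
  define fs where "fs = (\<lambda>s. f (s + d))"
  have fsi: "fs integrable_on {0..a}"
  proof -
    have e: "c - d = a" using d by simp
    have "(\<lambda>x. f (x + d)) integrable_on {0..c - d}"
      using integrable_shift_cbox[of f d c d] fi[of d c] d a by simp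
    thus ?thesis unfolding e fs_def .
  qed
  have fsnn: "0 \<le> fs x" if "x \<in> {0..a}" for x using nn that d a by (auto simp: fs_def)
  have shift: "integral {d..c} g = integral {0..a} (\<lambda>s. g (s + d))" for g :: "real \<Rightarrow> real"
  proof -
    have e: "c - d = a" using d by simp
    have "integral {0..c - d} (\<lambda>x. g (x + d)) = integral {d..c} g"
      using integral_shift_cbox[of d d c g] by simp
    thus ?thesis unfolding e by simp
  qed
  have split: "integral {0..c} g = integral {0..d} g + integral {d..c} g" if "g integrable_on {0..c}" for g :: "real \<Rightarrow> real"
    using Henstock_Kurzweil_Integration.integral_combine[where a=0 and c=d and b=c and f=g] that d a by simp
  define A1 where "A1 = integral {0..d} f"
  define A2 where "A2 = integral {0..a} fs"
  define K2 where "K2 = integral {0..a} (\<lambda>s. (a - s) * fs s)"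
  define P where "P = integral {0..d} (\<lambda>s. (d - s) * f s)"
  have Ac: "integral {0..c} f = A1 + A2"
    unfolding A1_def A2_def using split[OF fi[of 0 c]] shift[of f] a by (simp add: fs_def)
  have A1: "A1 \<ge> 0" unfolding A1_def
    by (rule integral_nonneg) (use a d fi nn in auto)
  have P: "P > 0" unfolding P_def
    by (rule int_pos) (use a d id1 nn fp in auto)
  have K1: "integral {0..d} (\<lambda>s. (c - s) * f s) = a * A1 + P"
  proof -
    have "integral {0..d} (\<lambda>s. (c - s) * f s) = integral {0..d} (\<lambda>s. a * f s + (d - s) * f s)"
      using d(2)[symmetric] by (intro arg_cong[where f="integral {0..d}"] ext) (simp add: algebra_simps)
    also have "\<dots> = integral {0..d} (\<lambda>s. a * f s) + P"
      unfolding P_def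
      by (rule integral_add) (use id1 iad in auto)
    finally show ?thesis by (simp add: A1_def)
  qed
  have Kc: "integral {0..c} (\<lambda>s. (c - s) * f s) = a * A1 + P + K2"
  proof -
    have "integral {0..c} (\<lambda>s. (c - s) * f s) = integral {0..d} (\<lambda>s. (c - s) * f s) + integral {d..c} (\<lambda>s. (c - s) * f s)"
      by (rule split) (use ic in auto)
    moreover have "integral {d..c} (\<lambda>s. (c - s) * f s) = K2"
      unfolding shift K2_def fs_def using d(2)[symmetric]
      by (intro arg_cong[where f="integral {0..a}"] ext) (simp add: algebra_simps)
    ultimately show ?thesis using K1 by simp
  qed
  \<comment> \<open>monotone likelihood ratio step\<close>
  define mu where "mu = Ka / Aa"
  define st where "st = a - mu"
  have st: "0 \<le> st" "st \<le> a" using Ka0 Kale Aa by (auto simp: st_def mu_def field_simps)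
  define rho where "rho = f (st + d) / f st"
  have fst: "f st > 0" using fp st a by auto
  have pw: "rho * (((a - s) - mu) * f s) \<le> ((a - s) - mu) * fs s" if s: "s \<in> {0..a}" for s
  proof (cases "s \<le> st")
    case True
    have "f s * f (st + d) \<le> f (s + d) * f st"
      using logc[OF fp lc, of s st d] s True d st a by auto
    hence "rho * f s \<le> fs s" using fst by (simp add: rho_def fs_def field_simps)
    moreover have "(a - s) - mu \<ge> 0" using True by (simp add: st_def)
    ultimately show ?thesis by (metis mult.left_commute mult_left_mono)
  next
    case False
    have "f st * f (s + d) \<le> f (st + d) * f s"
      using logc[OF fp lc, of st s d] s False d st a by auto
    hence "fs s \<le> rho * f s" using fst by (simp add: rho_def fs_def field_simps)
    moreover have "(a - s) - mu \<le> 0" using False by (simp add: st_def)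
    ultimately show ?thesis by (metis mult.left_commute mult_left_mono_neg)
  qed
  have i1: "(\<lambda>s. ((a - s) - mu) * fs s) integrable_on {0..a}"
    by (rule cont_prod_int[OF fsi fsnn]) (auto intro!: continuous_intros)
  have imu: "(\<lambda>s. ((a - s) - mu) * f s) integrable_on {0..a}"
    by (rule wi) (use a in \<open>auto intro!: continuous_intros\<close>)
  have imu2: "(\<lambda>s. mu * f s) integrable_on {0..a}"
    by (rule wi) (use a in \<open>auto intro!: continuous_intros\<close>)
  have i2: "(\<lambda>s. rho * (((a - s) - mu) * f s)) integrable_on {0..a}"
    using integrable_on_cmult_left[OF imu, of rho] by simp
  have "integral {0..a} (\<lambda>s. rho * (((a - s) - mu) * f s)) \<le> integral {0..a} (\<lambda>s. ((a - s) - mu) * fs s)"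
    by (rule integral_le[OF i2 i1 pw])
  moreover have "integral {0..a} (\<lambda>s. ((a - s) - mu) * f s) = Ka - mu * Aa"
  proof -
    have "integral {0..a} (\<lambda>s. ((a - s) - mu) * f s) = integral {0..a} (\<lambda>s. (a - s) * f s - mu * f s)"
      by (simp add: algebra_simps)
    also have "\<dots> = Ka - mu * Aa" unfolding Ka_def Aa_def
      by (subst integral_diff) (use ia imu2 in auto)
    finally show ?thesis .
  qed
  moreover have "Ka - mu * Aa = 0" using Aa by (simp add: mu_def)
  moreover have "integral {0..a} (\<lambda>s. ((a - s) - mu) * fs s) = K2 - mu * A2"
  proof -
    have "integral {0..a} (\<lambda>s. ((a - s) - mu) * fs s) = integral {0..a} (\<lambda>s. (a - s) * fs s - mu * fs s)"
      by (simp add: algebra_simps)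
    also have "\<dots> = K2 - mu * A2" unfolding K2_def A2_def
      by (subst integral_diff) (auto intro!: cont_prod_int[OF fsi fsnn] continuous_intros
           cont_prod_int[OF fsi fsnn, of "\<lambda>s. mu", simplified])
    finally show ?thesis .
  qed
  ultimately have "mu * A2 \<le> K2" by simp
  hence K2: "Ka * A2 \<le> K2 * Aa" using Aa by (simp add: mu_def field_simps)
  have "Ka * A1 \<le> a * Aa * A1" using Kale A1 by (simp add: mult_right_mono)
  moreover have "0 < P * Aa" using P Aa by simp
  ultimately have "Ka * (A1 + A2) < (a * A1 + P + K2) * Aa"
    using K2 by (simp add: algebra_simps)
  thus ?thesis using Ac Kc by (simp add: Ka_def Aa_def)
qed

lemma keyB:
  fixes f :: "real \<Rightarrow> real"
  assumes fp: "\<forall>t\<in>{0..1}. 0 < f t" and fint: "f integrable_on {0..1}"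
    and lc: "strictly_log_concave_on {0..1} f"
    and th: "0 < th" "th < 1" and theq: "th - S = cond_mean f th"
    and c: "th < c" "c \<le> 1"
  shows "integral {0..c} (\<lambda>s. s * f s) < (c - S) * integral {0..c} f"
proof -
  have fi: "f integrable_on {x..y}" if "0 \<le> x" "y \<le> 1" for x y
    using integrable_on_subinterval[OF fint] that by auto
  have nn: "0 \<le> f x" if "0 \<le> x" "x \<le> 1" for x
  proof -
    have "x \<in> {0..1}" using that by simp
    thus ?thesis using fp less_imp_le by blast
  qed
  have wi: "(\<lambda>s. g s * f s) integrable_on {x..y}" if "0 \<le> x" "y \<le> 1" "continuous_on {x..y} g" for x y g
    using cont_prod_int[OF fi[OF that(1,2)] _ that(3)] nn that by auto
  have K: "integral {0..t} (\<lambda>s. (t - s) * f s) = t * integral {0..t} f - integral {0..t} (\<lambda>s. s * f s)"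
    if "0 \<le> t" "t \<le> 1" for t
  proof -
    have "integral {0..t} (\<lambda>s. (t - s) * f s) = integral {0..t} (\<lambda>s. t * f s - s * f s)"
      by (simp add: algebra_simps)
    also have "\<dots> = integral {0..t} (\<lambda>s. t * f s) - integral {0..t} (\<lambda>s. s * f s)"
      by (rule integral_diff) (use that in \<open>auto intro!: wi continuous_intros\<close>)
    finally show ?thesis by simp
  qed
  have A0: "integral {0..th} f > 0"
    by (rule int_pos) (use th fi nn fp in auto)
  have Ac: "integral {0..c} f > 0"
    by (rule int_pos) (use th c fi nn fp in auto)
  have set: "{0..1} \<inter> {..th} = {0..th}" using th by auto
  have "integral {0..th} (\<lambda>s. s * f s) = (th - S) * integral {0..th} f"
    using theq A0 unfolding cond_mean_def cdf_def set by (simp add: field_simps)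
  hence K0: "integral {0..th} (\<lambda>s. (th - s) * f s) = S * integral {0..th} f"
    using K[of th] th by (simp add: algebra_simps)
  have "integral {0..th} (\<lambda>s. (th - s) * f s) * integral {0..c} f
       < integral {0..c} (\<lambda>s. (c - s) * f s) * integral {0..th} f"
    by (rule hmono[OF fp fint lc]) (use th c in auto)
  hence "S * integral {0..c} f * integral {0..th} f < integral {0..c} (\<lambda>s. (c - s) * f s) * integral {0..th} f"
    unfolding K0 by (simp add: algebra_simps)
  hence "S * integral {0..c} f < integral {0..c} (\<lambda>s. (c - s) * f s)"
    using A0 by simp
  thus ?thesis using K[of c] th c by (simp add: algebra_simps)
qed

lemma meas_int:
  fixes f g :: "real \<Rightarrow> real"
  assumes fp: "\<forall>t\<in>{0..1}. 0 < f t" and fint: "f integrable_on {0..1}"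
    and gm: "g measurable_on {0..1}" and gb: "\<And>t. t\<in>{0..1} \<Longrightarrow> \<bar>g t\<bar> \<le> B"
    and xy: "0 \<le> x" "y \<le> 1"
  shows "(\<lambda>t. g t * f t) integrable_on {x..y}" "(\<lambda>t. g t * t * f t) integrable_on {x..y}"
proof -
  have fi: "f integrable_on {x..y}"
    using integrable_on_subinterval[OF fint] xy by auto
  have nn: "0 \<le> f t" if "t \<in> {x..y}" for t
  proof -
    have "t \<in> {0..1}" using that xy by simp
    thus ?thesis using fp less_imp_le by blast
  qed
  have gm1: "g \<in> borel_measurable (lebesgue_on {0..1})"
    using measurable_on_iff_borel_measurable[of "{0..1}" g] gm by simp
  have gm2: "g \<in> borel_measurable (lebesgue_on {x..y})"
    by (rule measurable_restrict_mono[OF gm1]) (use xy in auto)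
  show "(\<lambda>t. g t * f t) integrable_on {x..y}"
    by (rule prod_int[OF fi nn _ gm2, of B]) (use gb xy in auto)
  have gm3: "(\<lambda>t. g t * t) \<in> borel_measurable (lebesgue_on {x..y})"
  proof -
    have "(\<lambda>t. t) \<in> borel_measurable (lebesgue_on {x..y})"
      by (rule continuous_imp_measurable_on_sets_lebesgue) (auto intro: continuous_intros)
    thus ?thesis using borel_measurable_times[OF gm2] by blast
  qed
  show "(\<lambda>t. g t * t * f t) integrable_on {x..y}"
  proof (rule prod_int[OF fi nn _ gm3, of B])
    fix t assume t: "t \<in> {x..y}"
    hence "\<bar>g t\<bar> \<le> B" "\<bar>t\<bar> \<le> 1" using gb xy by auto
    hence "\<bar>g t\<bar> * \<bar>t\<bar> \<le> B * 1" by (intro mult_mono) auto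
    thus "\<bar>g t * t\<bar> \<le> B" by (simp add: abs_mult)
  qed auto
qed

theorem theorem1:
  fixes f :: "real \<Rightarrow> real" and I S \<theta>0 pg pm :: real
    and sg sm :: "real \<Rightarrow> real"
  assumes f_pos: "\<forall>t\<in>{0..1}. 0 < f t"
    and f_density: "(f has_integral 1) {0..1}"
    and f_logconc: "strictly_log_concave_on {0..1} f"
    and I_pos: "0 < I" and S_pos: "0 < S"
    and \<theta>0_range: "0 < \<theta>0" "\<theta>0 < 1"
    and \<theta>0_eq: "\<theta>0 - S = cond_mean f \<theta>0"
    and \<theta>0_unique: "\<forall>t\<in>{0<..<1}. t - S = cond_mean f t \<longrightarrow> t = \<theta>0"
    and pg_gt: "pg > max (cond_mean f \<theta>0) I"
    and eq: "equilibrium f I S pg pm sg sm"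
  shows "(\<forall>t\<in>{0..1}. t < pg + S \<longrightarrow> sg t + sm t = 1 \<and> (0 < sm t \<longrightarrow> pm = pg))
       \<and> (\<forall>t\<in>{0..1}. pg + S < t \<longrightarrow> sg t = 0 \<and> sm t = 0)
       \<and> integral {0..1} (\<lambda>t. (sg t + sm t) * f t) > cdf f \<theta>0
       \<and> (group_fraction f (pg + S) sm > 0 \<longrightarrow>
            group_mean f (pg + S) sg < group_mean f (pg + S) sm)"
proof -
  define P where "P = sale_payoff I S"
  define bst where "bst t = max (max (P pg) (P pm)) t" for t
  have sgm: "sg measurable_on {0..1}" and smm: "sm measurable_on {0..1}"
    and bnd: "\<forall>t\<in>{0..1}. 0 \<le> sg t \<and> 0 \<le> sm t \<and> sg t + sm t \<le> 1"
    and rat: "\<forall>t\<in>{0..1}. (0 < sg t \<longrightarrow> P pg = bst t) \<and> (0 < sm t \<longrightarrow> P pm = bst t)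
                  \<and> (sg t + sm t < 1 \<longrightarrow> t = bst t)"
    and be: "((\<lambda>t. sm t * (t - pm) * f t) has_integral 0) {0..1}"
    using eq unfolding equilibrium_def Let_def P_def bst_def by blast+
  have bst: "P pg \<le> bst t" "P pm \<le> bst t" "t \<le> bst t" for t unfolding bst_def by auto
  have fint: "f integrable_on {0..1}" using f_density by blast
  have fi: "f integrable_on {x..y}" if "0 \<le> x" "y \<le> 1" for x y
    using integrable_on_subinterval[OF fint] that by auto
  have nn: "0 \<le> f x" if "0 \<le> x" "x \<le> 1" for x
  proof -
    have "x \<in> {0..1}" using that by simp
    thus ?thesis using f_pos less_imp_le by blast
  qed
  have wi: "(\<lambda>s. g s * f s) integrable_on {x..y}" if "0 \<le> x" "y \<le> 1" "continuous_on {x..y} g" for x y g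
    using cont_prod_int[OF fi[OF that(1,2)] _ that(3)] nn that by auto
  have tfi: "(\<lambda>s. s * f s) integrable_on {x..y}" if "0 \<le> x" "y \<le> 1" for x y
    using wi[OF that, of "\<lambda>s. s"] by (auto intro: continuous_intros)
  have pgI: "I < pg" and pgm: "cond_mean f \<theta>0 < pg" using pg_gt by auto
  have Ppg: "P pg = pg + S" using pgI by (simp add: P_def sale_payoff_def)
  have Ple: "P p \<le> p + S" for p using S_pos by (simp add: P_def sale_payoff_def)
  have th_lt: "\<theta>0 < pg + S" using pgm \<theta>0_eq by simp
  have sgb: "\<bar>sg t\<bar> \<le> 1" "\<bar>sm t\<bar> \<le> 1" if "t \<in> {0..1}" for t using bnd[rule_format, OF that] by auto

  have NP: "\<not> pm > pg"
  proof
    assume gt: "pm > pg"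
    have Ppm: "P pm = pm + S" using gt pgI by (simp add: P_def sale_payoff_def)
    have sg0: "sg t = 0" if t: "t\<in>{0..1}" for t
    proof (rule ccontr)
      assume "sg t \<noteq> 0" with bnd t have "0 < sg t" by force
      with rat t have "P pg = bst t" by blast
      with bst(2)[of t] Ppg Ppm gt show False by linarith
    qed
    have sm1: "sm t = 1" if t: "t\<in>{0..1}" "t < pm + S" for t
    proof (rule ccontr)
      assume "sm t \<noteq> 1" with bnd t sg0[OF t(1)] have "sg t + sm t < 1" by force
      with rat t have "t = bst t" by blast
      with bst(2)[of t] Ppm t show False by linarith
    qed
    have sm0: "sm t = 0" if t: "t\<in>{0..1}" "t > pm + S" for t
    proof (rule ccontr)
      assume "sm t \<noteq> 0" with bnd t have "0 < sm t" by force
      with rat t have "P pm = bst t" by blast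
      with bst(3)[of t] Ppm t show False by linarith
    qed
    define c where "c = min 1 (pm + S)"
    have c: "\<theta>0 < c" "c \<le> 1" "0 \<le> c" "c \<le> pm + S" using \<theta>0_range th_lt gt by (auto simp: c_def)
    have "((\<lambda>t. if t \<in> {0..c} then (t - pm) * f t else 0) has_integral 0) {0..1}"
    proof (rule has_integral_spike[OF negligible_sing[of "pm+S"] _ be])
      fix x :: real assume x: "x \<in> {0..1} - {pm + S}"
      show "(if x \<in> {0..c} then (x - pm) * f x else 0) = sm x * (x - pm) * f x"
      proof (cases "x \<le> c")
        case True
        hence "x < pm + S" using x c by auto
        thus ?thesis using sm1[of x] x True by auto
      next
        case False
        hence "x > pm + S" using x c by (auto simp: c_def)
        thus ?thesis using sm0[of x] x False by auto
      qed
    qed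
    hence "((\<lambda>t. (t - pm) * f t) has_integral 0) {0..c}"
      unfolding has_integral_restrict_Int using c by (simp add: Int_absorb2)
    hence "integral {0..c} (\<lambda>t. (t - pm) * f t) = 0" by (rule integral_unique)
    moreover have "integral {0..c} (\<lambda>t. (t - pm) * f t) = integral {0..c} (\<lambda>t. t * f t) - pm * integral {0..c} f"
    proof -
      have "integral {0..c} (\<lambda>t. (t - pm) * f t) = integral {0..c} (\<lambda>t. t * f t - pm * f t)"
        by (simp add: algebra_simps)
      also have "\<dots> = integral {0..c} (\<lambda>t. t * f t) - integral {0..c} (\<lambda>t. pm * f t)"
        by (rule integral_diff) (use c tfi fi in \<open>auto intro: integrable_on_mult_right\<close>)
      finally show ?thesis by simp
    qed
    moreover have "integral {0..c} (\<lambda>s. s * f s) < (c - S) * integral {0..c} f"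
      by (rule keyB[OF f_pos fint f_logconc \<theta>0_range \<theta>0_eq]) (use c in auto)
    moreover have "(c - S) * integral {0..c} f \<le> pm * integral {0..c} f"
      by (rule mult_right_mono) (use c nn in \<open>auto intro!: integral_nonneg fi\<close>)
    ultimately show False by linarith
  qed

  have PMEQ: "pm = pg" if t: "t\<in>{0..1}" "0 < sm t" for t
  proof -
    from rat t have "P pm = bst t" by blast
    with bst(1)[of t] Ppg have ge: "P pm \<ge> pg + S" by linarith
    have "pm \<ge> pg"
    proof (cases "I \<le> pm")
      case True thus ?thesis using ge by (simp add: P_def sale_payoff_def)
    next
      case False thus ?thesis using ge pgI S_pos by (simp add: P_def sale_payoff_def)
    qed
    thus ?thesis using NP by simp
  qed

  have C1: "\<forall>t\<in>{0..1}. t < pg + S \<longrightarrow> sg t + sm t = 1 \<and> (0 < sm t \<longrightarrow> pm = pg)"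
  proof (intro ballI impI conjI)
    fix t assume t: "t \<in> {0..1}" "t < pg + S"
    show "sg t + sm t = 1"
    proof (rule ccontr)
      assume "sg t + sm t \<noteq> 1" with bnd t have "sg t + sm t < 1" by force
      with rat t have "t = bst t" by blast
      with bst(1)[of t] Ppg t show False by linarith
    qed
    show "0 < sm t \<Longrightarrow> pm = pg" using PMEQ t by blast
  qed
  have C2: "\<forall>t\<in>{0..1}. pg + S < t \<longrightarrow> sg t = 0 \<and> sm t = 0"
  proof (intro ballI impI conjI)
    fix t assume t: "t \<in> {0..1}" "pg + S < t"
    show "sg t = 0"
    proof (rule ccontr)
      assume "sg t \<noteq> 0" with bnd t have "0 < sg t" by force
      with rat t have "P pg = bst t" by blast
      with bst(3)[of t] Ppg t show False by linarith
    qed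
    show "sm t = 0"
    proof (rule ccontr)
      assume "sm t \<noteq> 0" with bnd t have "0 < sm t" by force
      with rat t have "P pm = bst t" by blast
      with bst(3)[of t] Ple[of pm] NP t show False by linarith
    qed
  qed

  define c where "c = min 1 (pg + S)"
  have c: "\<theta>0 < c" "c \<le> 1" "0 \<le> c" "c \<le> pg + S" using \<theta>0_range th_lt by (auto simp: c_def)
  have Dset: "{0..1} \<inter> {..x} = {0..min 1 x}" for x :: real by auto
  have D: "{0..1} \<inter> {..pg + S} = {0..c}" unfolding c_def by (rule Dset)

  have C3: "integral {0..1} (\<lambda>t. (sg t + sm t) * f t) > cdf f \<theta>0"
  proof -
    have ssm: "(\<lambda>t. sg t + sm t) measurable_on {0..1}" by (rule measurable_on_add[OF sgm smm])
    have iS: "(\<lambda>t. (sg t + sm t) * f t) integrable_on {0..1}"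
      by (rule meas_int(1)[OF f_pos fint ssm, of 1]) (use bnd in force)+
    define G where "G t = (if t = pg + S then f t else (sg t + sm t) * f t)" for t
    have eqG: "integral {0..1} (\<lambda>t. (sg t + sm t) * f t) = integral {0..1} G"
      by (rule integral_spike[OF negligible_sing[of "pg+S"]]) (simp add: G_def)
    have iG: "G integrable_on {0..1}"
      by (rule integrable_spike[OF iS negligible_sing[of "pg+S"]]) (simp add: G_def)
    define L where "L t = (if t \<in> {0..c} then f t else 0)" for t
    have iL: "(L has_integral integral {0..c} f) {0..1}"
      unfolding L_def has_integral_restrict_Int using c fi[of 0 c]
      by (simp add: Int_absorb2 integrable_integral)
    have "integral {0..c} f \<le> integral {0..1} G"
    proof -
      have "integral {0..1} L \<le> integral {0..1} G"
      proof (rule integral_le)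
        show "L integrable_on {0..1}" using iL by blast
        show "G integrable_on {0..1}" by (rule iG)
        fix x :: real assume x: "x \<in> {0..1}"
        show "L x \<le> G x"
        proof (cases "x \<in> {0..c}")
          case True
          show ?thesis
          proof (cases "x = pg + S")
            case True thus ?thesis using \<open>x \<in> {0..c}\<close> by (simp add: L_def G_def)
          next
            case False
            hence "x < pg + S" using True c by auto
            hence "sg x + sm x = 1" using C1 x by blast
            thus ?thesis using \<open>x \<in> {0..c}\<close> False by (simp add: L_def G_def)
          qed
        next
          case False
          have "0 \<le> G x" using bnd x nn[of x] by (auto simp: G_def)
          have "L x = 0" using False unfolding L_def by auto
          thus ?thesis using \<open>0 \<le> G x\<close> by simp
        qed
      qed
      thus ?thesis using integral_unique[OF iL] by simp
    qed
    moreover have "integral {0..c} f = integral {0..\<theta>0} f + integral {\<theta>0..c} f"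
      using Henstock_Kurzweil_Integration.integral_combine[where a=0 and c=\<theta>0 and b=c and f=f] c \<theta>0_range fi[of 0 c]
      by simp
    moreover have "integral {\<theta>0..c} f > 0"
      by (rule int_pos) (use c \<theta>0_range fi nn f_pos in auto)
    moreover have "cdf f \<theta>0 = integral {0..\<theta>0} f"
      unfolding cdf_def Dset using \<theta>0_range by simp
    ultimately show ?thesis using eqG by linarith
  qed

  have C4: "group_fraction f (pg + S) sm > 0 \<longrightarrow>
            group_mean f (pg + S) sg < group_mean f (pg + S) sm"
  proof
    assume fr: "group_fraction f (pg + S) sm > 0"
    define A where "A = integral {0..c} f"
    define B where "B = integral {0..c} (\<lambda>t. t * f t)"
    define Msm where "Msm = integral {0..c} (\<lambda>t. sm t * f t)"
    define Tsm where "Tsm = integral {0..c} (\<lambda>t. sm t * t * f t)"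
    define Msg where "Msg = integral {0..c} (\<lambda>t. sg t * f t)"
    define Tsg where "Tsg = integral {0..c} (\<lambda>t. sg t * t * f t)"
    have A0: "A \<ge> 0" unfolding A_def by (rule integral_nonneg) (use c fi nn in auto)
    have "Msm / A > 0" using fr unfolding group_fraction_def group_mass_def cdf_def D Msm_def A_def .
    hence Msm: "Msm > 0" using A0 by (auto simp: zero_less_divide_iff)
    have "\<exists>t\<in>{0..c}. sm t \<noteq> 0"
    proof (rule ccontr)
      assume "\<not> ?thesis"
      hence "Msm = integral {0..c} (\<lambda>t. 0::real)" unfolding Msm_def by (intro integral_cong) auto
      thus False using Msm by simp
    qed
    then obtain t where t: "t \<in> {0..c}" "sm t \<noteq> 0" by blast
    have "0 < sm t" using t bnd c by force
    hence pmpg: "pm = pg" using PMEQ[of t] t c by auto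
    have ism: "(\<lambda>t. sm t * f t) integrable_on {0..c}" "(\<lambda>t. sm t * t * f t) integrable_on {0..c}"
      using meas_int[OF f_pos fint smm, of 1 0 c] sgb(2) c by auto
    have isg: "(\<lambda>t. sg t * f t) integrable_on {0..c}" "(\<lambda>t. sg t * t * f t) integrable_on {0..c}"
      using meas_int[OF f_pos fint sgm, of 1 0 c] sgb(1) c by auto
    have "((\<lambda>t. if t \<in> {0..c} then sm t * (t - pg) * f t else 0) has_integral 0) {0..1}"
    proof (rule has_integral_spike[OF negligible_empty _ be])
      fix x :: real assume x: "x \<in> {0..1} - {}"
      show "(if x \<in> {0..c} then sm x * (x - pg) * f x else 0) = sm x * (x - pm) * f x"
      proof (cases "x \<le> c")
        case True thus ?thesis using x pmpg by auto
      next
        case False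
        hence "x > pg + S" using x c by (auto simp: c_def)
        thus ?thesis using C2 x False by auto
      qed
    qed
    hence "((\<lambda>t. sm t * (t - pg) * f t) has_integral 0) {0..c}"
      unfolding has_integral_restrict_Int using c by (simp add: Int_absorb2)
    hence "integral {0..c} (\<lambda>t. sm t * (t - pg) * f t) = 0" by (rule integral_unique)
    moreover have "integral {0..c} (\<lambda>t. sm t * (t - pg) * f t) = Tsm - pg * Msm"
    proof -
      have "integral {0..c} (\<lambda>t. sm t * (t - pg) * f t) = integral {0..c} (\<lambda>t. sm t * t * f t - pg * (sm t * f t))"
        by (simp add: algebra_simps)
      also have "\<dots> = Tsm - integral {0..c} (\<lambda>t. pg * (sm t * f t))"
        unfolding Tsm_def by (rule integral_diff) (use ism in \<open>auto intro: integrable_on_mult_right\<close>)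
      finally show ?thesis by (simp add: Msm_def)
    qed
    ultimately have Tsm: "Tsm = pg * Msm" by simp
    have gm_sm: "group_mean f (pg + S) sm = pg"
      unfolding group_mean_def group_mass_def D using Tsm Msm by (simp add: Tsm_def[symmetric] Msm_def[symmetric])
    have Tsg: "Tsg = B - Tsm"
    proof -
      have "Tsg = integral {0..c} (\<lambda>t. t * f t - sm t * t * f t)"
        unfolding Tsg_def
      proof (rule integral_spike[OF negligible_sing[of "pg+S"]])
        fix x :: real assume x: "x \<in> {0..c} - {pg + S}"
        hence "x < pg + S" "x \<in> {0..1}" using c by auto
        hence e: "sg x = 1 - sm x" using C1 by force
        show "x * f x - sm x * x * f x = sg x * x * f x" unfolding e by (simp add: algebra_simps)
      qed
      also have "\<dots> = B - Tsm" unfolding B_def Tsm_def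
        by (rule integral_diff) (use ism tfi c in auto)
      finally show ?thesis .
    qed
    have Msg: "Msg = A - Msm"
    proof -
      have "Msg = integral {0..c} (\<lambda>t. f t - sm t * f t)"
        unfolding Msg_def
      proof (rule integral_spike[OF negligible_sing[of "pg+S"]])
        fix x :: real assume x: "x \<in> {0..c} - {pg + S}"
        hence "x < pg + S" "x \<in> {0..1}" using c by auto
        hence e: "sg x = 1 - sm x" using C1 by force
        show "f x - sm x * f x = sg x * f x" unfolding e by (simp add: algebra_simps)
      qed
      also have "\<dots> = A - Msm" unfolding A_def Msm_def
        by (rule integral_diff) (use ism fi c in auto)
      finally show ?thesis .
    qed
    have gm_sg: "group_mean f (pg + S) sg = Tsg / Msg"
      unfolding group_mean_def group_mass_def D Tsg_def Msg_def ..
    have Msg0: "Msg \<ge> 0" unfolding Msg_def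
      by (rule integral_nonneg[OF isg(1)]) (use bnd c nn in auto)
    have pg0: "pg > 0" using pgI I_pos by simp
    have "B < (c - S) * A" unfolding B_def A_def
      by (rule keyB[OF f_pos fint f_logconc \<theta>0_range \<theta>0_eq]) (use c in auto)
    moreover have "(c - S) * A \<le> pg * A" using c A0 by (intro mult_right_mono) auto
    ultimately have BA: "B < pg * A" by linarith
    show "group_mean f (pg + S) sg < group_mean f (pg + S) sm"
    proof (cases "Msg = 0")
      case True thus ?thesis using gm_sg gm_sm pg0 by simp
    next
      case False
      hence "Msg > 0" using Msg0 by simp
      moreover have "Tsg < pg * Msg"
      proof -
        have "pg * A = pg * Msg + pg * Msm" unfolding Msg by (simp add: algebra_simps)
        thus ?thesis using Tsg Tsm BA by linarith
      qed
      ultimately show ?thesis using gm_sg gm_sm by (simp add: divide_less_eq)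
    qed
  qed
  show ?thesis using C1 C2 C3 C4 by blast
qed

end
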